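(* Let $k\in\mathbb{N}$. If $f\in\mathcal{L}^{(k)}$ and $v\in T^*$, then $|f(v)|\le\ell_k(|v|)\,\|f\|_k$.
   Context: $T$ is a tree (locally finite, connected, simply connected graph, identified with its vertex set) without terminal vertices, rooted at $o$. $|v|$ is the distance from $o$ to $v$; for $v\ne o$, $v^-$ is the parent of $v$. $T^*=T\setminus\{o\}$, $Df(v)=|f(v)-f(v^-)|$. For $x\ge1$: $\ell_0(x)=1$, $\ell_1(x)=1+\ln x$, $\ell_j(x)=1+\ln\ell_{j-1}(x)$ for $j\ge2$. $\mathcal{L}^{(k)}$ is the space of $f:T\to\mathbb{C}$ with $\sup_{v\in T^*}|v|\prod_{j=0}^{k-1}\ell_j(|v|)Df(v)<\infty$, and $\|f\|_k=|f(o)|+\sup_{v\in T^*}|v|\prod_{j=0}^{k-1}\ell_j(|v|)Df(v)$. *)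

theory Defs
  imports Complex_Main
begin

text \<open>A rooted tree with vertex set the type 'v, root r, given by its parent map par:
  the edges are the pairs {v, par v} for v \<noteq> r.  Every vertex reaches the root by
  iterating par (connected; acyclicity is automatic for a parent structure).\<close>

definition tree_nbrs :: "('v \<Rightarrow> 'v) \<Rightarrow> 'v \<Rightarrow> 'v \<Rightarrow> 'v set" where
  "tree_nbrs par r v = {w. w \<noteq> r \<and> par w = v} \<union> (if v = r then {} else {par v})"

definition rooted_tree :: "('v \<Rightarrow> 'v) \<Rightarrow> 'v \<Rightarrow> bool" where
  "rooted_tree par r \<longleftrightarrow>
     (\<forall>v. \<exists>n. (par ^^ n) v = r) \<and>
     (\<forall>v. finite (tree_nbrs par r v)) \<and>
     (\<forall>v. card (tree_nbrs par r v) \<noteq> 1)"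

definition depth :: "('v \<Rightarrow> 'v) \<Rightarrow> 'v \<Rightarrow> 'v \<Rightarrow> nat" where
  "depth par r v = (LEAST n. (par ^^ n) v = r)"

fun ell :: "nat \<Rightarrow> real \<Rightarrow> real" where
  "ell 0 x = 1"
| "ell (Suc 0) x = 1 + ln x"
| "ell (Suc (Suc j)) x = 1 + ln (ell (Suc j) x)"

definition Df :: "('v \<Rightarrow> 'v) \<Rightarrow> ('v \<Rightarrow> complex) \<Rightarrow> 'v \<Rightarrow> real" where
  "Df par f v = cmod (f v - f (par v))"

definition Lweight :: "nat \<Rightarrow> nat \<Rightarrow> real" where
  "Lweight k n = real n * (\<Prod>j<k. ell j (real n))"

definition Lk :: "('v \<Rightarrow> 'v) \<Rightarrow> 'v \<Rightarrow> nat \<Rightarrow> ('v \<Rightarrow> complex) set" where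
  "Lk par r k = {f. bdd_above ((\<lambda>v. Lweight k (depth par r v) * Df par f v) ` {v. v \<noteq> r})}"

definition Lk_norm :: "('v \<Rightarrow> 'v) \<Rightarrow> 'v \<Rightarrow> nat \<Rightarrow> ('v \<Rightarrow> complex) \<Rightarrow> real" where
  "Lk_norm par r k f = cmod (f r) + (SUP v\<in>{v. v \<noteq> r}. Lweight k (depth par r v) * Df par f v)"

end

theory Submission
  imports Defs
begin

lemma ell_ge1: "x \<ge> 1 \<Longrightarrow> ell j x \<ge> 1"
proof (induction j x rule: ell.induct)
  case (3 j x)
  then show ?case by simp
qed auto

lemma ell_at1: "ell j 1 = 1"
  by (induction j "1::real" rule: ell.induct) auto

definition wr :: "nat \<Rightarrow> real \<Rightarrow> real" where
  "wr k x = x * (\<Prod>j<k. ell j x)"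

lemma wr_pos: "x \<ge> 1 \<Longrightarrow> wr k x > 0"
  unfolding wr_def using ell_ge1 by (intro mult_pos_pos prod_pos) (auto intro: less_le_trans[of 0 1])

lemma ln_diff: "0 < (a::real) \<Longrightarrow> a \<le> b \<Longrightarrow> (b - a) / b \<le> ln b - ln a"
proof -
  assume a: "0 < a" "a \<le> b"
  have "ln (a/b) \<le> a/b - 1" using ln_le_minus_one[of "a/b"] a by simp
  moreover have "ln (a/b) = ln a - ln b" using a by (simp add: ln_div)
  moreover have "(b - a)/b = 1 - a/b" using a by (simp add: field_simps)
  ultimately show ?thesis by linarith
qed

lemma key: "k \<ge> 1 \<Longrightarrow> 1 \<le> a \<Longrightarrow> a \<le> b \<Longrightarrow> (b - a) / wr k b \<le> ell k b - ell k a"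
proof (induction k rule: nat_induct_at_least)
  case base
  then show ?case using ln_diff[of a b] by (simp add: wr_def)
next
  case (Suc k)
  then obtain k' where k': "k = Suc k'" by (cases k) auto
  have e1: "ell k a \<ge> 1" "ell k b \<ge> 1" using Suc ell_ge1 by auto
  have ih: "(b - a) / wr k b \<le> ell k b - ell k a" using Suc by auto
  have wp: "wr k b > 0" using wr_pos Suc by auto
  have "ell k a \<le> ell k b"
    using ih wp Suc.prems by (smt (verit) divide_nonneg_pos)
  hence l: "(ell k b - ell k a) / ell k b \<le> ln (ell k b) - ln (ell k a)"
    using ln_diff[of "ell k a" "ell k b"] e1 by linarith
  have "(b - a) / wr (Suc k) b = ((b - a) / wr k b) / ell k b"
    by (simp add: wr_def)
  also have "\<dots> \<le> (ell k b - ell k a) / ell k b"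
    using ih e1 by (intro divide_right_mono) auto
  also have "\<dots> \<le> ell (Suc k) b - ell (Suc k) a"
    using l k' by simp
  finally show ?case .
qed

lemma sum_bound:
  assumes "k \<ge> 1" "n \<ge> 1"
  shows "(\<Sum>i\<in>{1..n}. 1 / wr k (real i)) \<le> ell k (real n)"
  using assms(2)
proof (induction n rule: nat_induct_at_least)
  case base
  then show ?case by (simp add: wr_def ell_at1)
next
  case (Suc n)
  have "(\<Sum>i\<in>{1..Suc n}. 1 / wr k (real i)) = (\<Sum>i\<in>{1..n}. 1 / wr k (real i)) + 1 / wr k (real (Suc n))"
    by simp
  also have "\<dots> \<le> ell k (real n) + (real (Suc n) - real n) / wr k (real (Suc n))"
    using Suc by simp
  also have "\<dots> \<le> ell k (real (Suc n))"
    using key[OF assms(1), of "real n" "real (Suc n)"] Suc by simp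
  finally show ?case .
qed

lemma depth_par:
  assumes "rooted_tree par r" "v \<noteq> r"
  shows "depth par r v = Suc (depth par r (par v))"
proof -
  obtain n where n: "(par ^^ n) v = r" using assms unfolding rooted_tree_def by blast
  have ex: "(par ^^ depth par r v) v = r" unfolding depth_def using n by (rule LeastI)
  have ne0: "depth par r v \<noteq> 0" by (metis ex assms(2) funpow_0)
  then obtain m where m: "depth par r v = Suc m" by (cases "depth par r v") auto
  have pm: "(par ^^ m) (par v) = r" using ex m by (simp add: funpow_Suc_right del: funpow.simps)
  have le: "depth par r (par v) \<le> m" unfolding depth_def using pm by (rule Least_le)
  have ex2: "(par ^^ depth par r (par v)) (par v) = r" unfolding depth_def using pm by (rule LeastI)
  hence "(par ^^ Suc (depth par r (par v))) v = r" by (simp add: funpow_Suc_right del: funpow.simps)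
  hence "depth par r v \<le> Suc (depth par r (par v))" unfolding depth_def by (rule Least_le)
  with le m show ?thesis by simp
qed

lemma depth_r: "depth par r r = 0"
  unfolding depth_def by simp

theorem proposition2p2:
  fixes par :: "'v \<Rightarrow> 'v" and r :: 'v and k :: nat and f :: "'v \<Rightarrow> complex" and v :: 'v
  assumes "rooted_tree par r"
    and "k \<ge> 1"
    and "f \<in> Lk par r k"
    and "v \<noteq> r"
  shows "cmod (f v) \<le> ell k (real (depth par r v)) * Lk_norm par r k f"
proof -
  define M where "M = (SUP v\<in>{v. v \<noteq> r}. Lweight k (depth par r v) * Df par f v)"
  have bdd: "bdd_above ((\<lambda>v. Lweight k (depth par r v) * Df par f v) ` {v. v \<noteq> r})"
    using assms(3) unfolding Lk_def by simp
  have LW: "Lweight k n = wr k (real n)" for n unfolding Lweight_def wr_def by simp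
  have up: "Lweight k (depth par r u) * Df par f u \<le> M" if "u \<noteq> r" for u
    unfolding M_def using bdd that by (intro cSUP_upper) auto
  have dpos: "depth par r u \<ge> 1" if "u \<noteq> r" for u
    using depth_par[OF assms(1) that] by simp
  have Df_le: "Df par f u \<le> M / wr k (real (depth par r u))" if "u \<noteq> r" for u
  proof -
    have "wr k (real (depth par r u)) > 0" using wr_pos dpos[OF that] by simp
    thus ?thesis using up[OF that] by (simp add: LW field_simps mult.commute)
  qed
  have M0: "M \<ge> 0"
  proof -
    have "0 \<le> Lweight k (depth par r v) * Df par f v"
      using wr_pos[of "real (depth par r v)" k] dpos[OF assms(4)]
      by (simp add: LW Df_def)
    thus ?thesis using up[OF assms(4)] by linarith
  qed
  have main: "\<forall>u. depth par r u = n \<longrightarrow> cmod (f u - f r) \<le> M * (\<Sum>i\<in>{1..n}. 1 / wr k (real i))" for n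
  proof (induction n)
    case 0
    show ?case
    proof (intro allI impI)
      fix u assume "depth par r u = 0"
      hence "u = r" using depth_par[OF assms(1), of u] by (cases "u = r") auto
      thus "cmod (f u - f r) \<le> M * (\<Sum>i\<in>{1..0}. 1 / wr k (real i))" by simp
    qed
  next
    case (Suc n)
    show ?case
    proof (intro allI impI)
      fix u assume du: "depth par r u = Suc n"
      have ur: "u \<noteq> r" using du depth_r[of par r] by auto
      have dp: "depth par r (par u) = n" using depth_par[OF assms(1) ur] du by simp
      have "cmod (f u - f r) \<le> cmod (f u - f (par u)) + cmod (f (par u) - f r)"
        using norm_triangle_ineq[of "f u - f (par u)" "f (par u) - f r"] by simp
      also have "\<dots> \<le> M / wr k (real (Suc n)) + M * (\<Sum>i\<in>{1..n}. 1 / wr k (real i))"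
        using Df_le[OF ur] du Suc.IH dp unfolding Df_def by (intro add_mono) auto
      also have "\<dots> = M * (\<Sum>i\<in>{1..Suc n}. 1 / wr k (real i))"
        by (simp add: algebra_simps)
      finally show "cmod (f u - f r) \<le> M * (\<Sum>i\<in>{1..Suc n}. 1 / wr k (real i))" .
    qed
  qed
  define n where "n = depth par r v"
  have n1: "n \<ge> 1" using dpos[OF assms(4)] n_def by simp
  have E: "ell k (real n) \<ge> 1" using ell_ge1 n1 by simp
  have "cmod (f v) \<le> cmod (f r) + cmod (f v - f r)"
    using norm_triangle_ineq[of "f r" "f v - f r"] by simp
  also have "\<dots> \<le> cmod (f r) + M * ell k (real n)"
    using main[of n] n_def sum_bound[OF assms(2) n1] M0 mult_left_mono by fastforce
  also have "\<dots> \<le> ell k (real n) * cmod (f r) + M * ell k (real n)"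
    using E by (simp add: mult_le_cancel_right1)
  also have "\<dots> = ell k (real (depth par r v)) * Lk_norm par r k f"
    unfolding Lk_norm_def M_def n_def by (simp add: algebra_simps)
  finally show ?thesis .
qed

end
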